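(* For every integer $t\ge1$, $s(3t,3t,3t-2)=3$.
   Context: A placement delivery array $S$-PDA$(F,K,Z)$ is an $F\times K$ array $R=(r_{j,k})$, $1\le j\le F$, $1\le k\le K$, over a finite set $S$ such that: (1) each cell is either empty or contains an element of $S$; (2) each column contains exactly $Z$ empty cells; (3) each element of $S$ occurs at most once in each row and at most once in each column; (4) if two distinct nonempty cells satisfy $r_{j_1,k_1}=r_{j_2,k_2}=t\in S$, then the cells $r_{j_1,k_2}$ and $r_{j_2,k_1}$ are empty. For integers $F,K\ge1$, $0\le Z\le F$, define $s(F,K,Z)=\min\{|S| : \text{there exists an } S\text{-PDA}(F,K,Z)\}$. *)

theory Defs
  imports Main
begin

text \<open>Symbols are taken to be natural numbers (WLOG, only the cardinality of S matters).\<close>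

definition is_PDA :: "nat \<Rightarrow> nat \<Rightarrow> nat \<Rightarrow> nat set \<Rightarrow> (nat \<Rightarrow> nat \<Rightarrow> nat option) \<Rightarrow> bool" where
  "is_PDA F K Z S R \<longleftrightarrow>
     finite S \<and>
     (\<forall>j<F. \<forall>k<K. \<forall>t. R j k = Some t \<longrightarrow> t \<in> S) \<and>
     (\<forall>k<K. card {j. j < F \<and> R j k = None} = Z) \<and>
     (\<forall>t\<in>S. \<forall>j<F. \<forall>k1<K. \<forall>k2<K. R j k1 = Some t \<and> R j k2 = Some t \<longrightarrow> k1 = k2) \<and>
     (\<forall>t\<in>S. \<forall>k<K. \<forall>j1<F. \<forall>j2<F. R j1 k = Some t \<and> R j2 k = Some t \<longrightarrow> j1 = j2) \<and>
     (\<forall>j1<F. \<forall>j2<F. \<forall>k1<K. \<forall>k2<K. \<forall>t.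
        (j1, k1) \<noteq> (j2, k2) \<and> R j1 k1 = Some t \<and> R j2 k2 = Some t \<longrightarrow>
        R j1 k2 = None \<and> R j2 k1 = None)"

definition s_PDA :: "nat \<Rightarrow> nat \<Rightarrow> nat \<Rightarrow> nat" where
  "s_PDA F K Z = (LEAST n. \<exists>S R. is_PDA F K Z S R \<and> card S = n)"

end

theory Submission
  imports Defs
begin

definition Rc :: "nat \<Rightarrow> nat \<Rightarrow> nat option" where
  "Rc j k = (if j div 3 = k div 3 \<and> j mod 3 \<noteq> k mod 3 then Some (j mod 3 + k mod 3 - 1) else None)"

lemma filled_set:
  assumes "k < 3*t"
  shows "{j. j < 3*t \<and> Rc j k \<noteq> None} = (\<lambda>i. 3*(k div 3) + i) ` ({0,1,2} - {k mod 3})"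
proof -
  have kt: "k div 3 < t" using assms by auto
  show ?thesis
  proof (rule set_eqI, rule iffI)
    fix j assume "j \<in> {j. j < 3*t \<and> Rc j k \<noteq> None}"
    then have h: "j div 3 = k div 3" "j mod 3 \<noteq> k mod 3" by (auto simp: Rc_def split: if_splits)
    have "j = 3*(j div 3) + j mod 3" by simp
    then have "j = 3*(k div 3) + j mod 3" using h(1) by simp
    moreover have "j mod 3 \<in> {0,1,2} - {k mod 3}" using h(2) by auto
    ultimately show "j \<in> (\<lambda>i. 3*(k div 3) + i) ` ({0,1,2} - {k mod 3})" by (intro rev_image_eqI[of "j mod 3"]) simp_all
  next
    fix j assume "j \<in> (\<lambda>i. 3*(k div 3) + i) ` ({0,1,2} - {k mod 3})"
    then obtain i where i0: "i \<in> {0,1,2} - {k mod 3}" "j = 3*(k div 3) + i" by (rule imageE)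
    then have i: "i \<in> {0,1,2}" "i \<noteq> k mod 3" "j = 3*(k div 3) + i" by simp_all
    have d: "j div 3 = k div 3" "j mod 3 = i" using i(1,3) by auto
    have "j < 3*t" using i(1,3) kt by auto
    then show "j \<in> {j. j < 3*t \<and> Rc j k \<noteq> None}" using i(2) d by (simp add: Rc_def)
  qed
qed

lemma card_filled:
  assumes "k < 3*t"
  shows "card {j. j < 3*t \<and> Rc j k \<noteq> None} = 2"
proof -
  have "card ({0,1,2::nat} - {k mod 3}) = 2"
  proof -
    have "k mod 3 = 0 \<or> k mod 3 = 1 \<or> k mod 3 = 2" by auto
    then show ?thesis by auto
  qed
  moreover have "inj_on (\<lambda>i. 3*(k div 3) + i) ({0,1,2} - {k mod 3})" by (auto simp: inj_on_def)
  ultimately show ?thesis unfolding filled_set[OF assms] by (simp add: card_image)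
qed

lemma card_none:
  assumes "k < 3*t"
  shows "card {j. j < 3*t \<and> Rc j k = None} = 3*t - 2"
proof -
  let ?A = "{j. j < 3*t \<and> Rc j k \<noteq> None}"
  have "{j. j < 3*t \<and> Rc j k = None} = {..<3*t} - ?A" by auto
  moreover have "?A \<subseteq> {..<3*t}" by auto
  ultimately show ?thesis using card_filled[OF assms] by (simp add: card_Diff_subset finite_subset)
qed

lemma resid: "(a::nat) < 3 \<Longrightarrow> b < 3 \<Longrightarrow> c < 3 \<Longrightarrow> d < 3 \<Longrightarrow> a \<noteq> b \<Longrightarrow> c \<noteq> d
  \<Longrightarrow> a + b - 1 = c + d - 1 \<Longrightarrow> (a = c \<and> b = d) \<or> (a = d \<and> b = c)"
  by arith

lemma eq3: "(j::nat) div 3 = k div 3 \<Longrightarrow> j mod 3 = k mod 3 \<Longrightarrow> j = k"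
  by (metis div_mult_mod_eq)

lemma cross:
  assumes a: "(j1, k1) \<noteq> (j2, k2) \<and> Rc j1 k1 = Some s \<and> Rc j2 k2 = Some s"
  shows "Rc j1 k2 = None \<and> Rc j2 k1 = None"
proof -
  from a have h: "j1 div 3 = k1 div 3" "j2 div 3 = k2 div 3" "j1 mod 3 \<noteq> k1 mod 3" "j2 mod 3 \<noteq> k2 mod 3"
    "j1 mod 3 + k1 mod 3 - 1 = j2 mod 3 + k2 mod 3 - 1" by (auto simp: Rc_def split: if_splits)
  show ?thesis
  proof (cases "j1 div 3 = j2 div 3")
    case False then show ?thesis using h by (auto simp: Rc_def)
  next
    case True
    have "(j1 mod 3 = j2 mod 3 \<and> k1 mod 3 = k2 mod 3) \<or> (j1 mod 3 = k2 mod 3 \<and> k1 mod 3 = j2 mod 3)"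
      by (rule resid) (use h in simp_all)
    then show ?thesis
    proof
      assume "j1 mod 3 = j2 mod 3 \<and> k1 mod 3 = k2 mod 3"
      moreover have "k1 div 3 = k2 div 3" using True h(1,2) by simp
      ultimately have "j1 = j2" "k1 = k2" using True eq3 by blast+
      then show ?thesis using a by auto
    qed (auto simp: Rc_def)
  qed
qed

lemma construction: "t \<ge> 1 \<Longrightarrow> is_PDA (3*t) (3*t) (3*t-2) {0,1,2} Rc"
  unfolding is_PDA_def
proof (intro conjI allI impI ballI)
  show "finite {0,1,2::nat}" by simp
next
  fix j k s assume "j < 3*t" "k < 3*t" "Rc j k = Some s"
  then have "s = j mod 3 + k mod 3 - 1" "j mod 3 \<noteq> k mod 3" by (auto simp: Rc_def split: if_splits)
  moreover have "j mod 3 < 3" "k mod 3 < 3" by simp_all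
  ultimately have "s \<le> 2" by linarith
  then show "s \<in> {0,1,2}" by auto
next
  fix k assume "k < 3*t" then show "card {j. j < 3*t \<and> Rc j k = None} = 3*t - 2" by (rule card_none)
next
  fix s j k1 k2 assume "Rc j k1 = Some s \<and> Rc j k2 = Some s"
  then have h: "j div 3 = k1 div 3" "j div 3 = k2 div 3" "j mod 3 \<noteq> k1 mod 3" "j mod 3 \<noteq> k2 mod 3"
    "j mod 3 + k1 mod 3 - 1 = j mod 3 + k2 mod 3 - 1" by (auto simp: Rc_def split: if_splits)
  have "(j mod 3 = j mod 3 \<and> k1 mod 3 = k2 mod 3) \<or> (j mod 3 = k2 mod 3 \<and> k1 mod 3 = j mod 3)"
    by (rule resid) (use h in simp_all)
  then have "k1 mod 3 = k2 mod 3" using h(4) by blast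
  moreover have "k1 div 3 = k2 div 3" using h(1,2) by simp
  ultimately show "k1 = k2" using eq3 by blast
next
  fix s k j1 j2 assume "Rc j1 k = Some s \<and> Rc j2 k = Some s"
  then have h: "j1 div 3 = k div 3" "j2 div 3 = k div 3" "j1 mod 3 \<noteq> k mod 3" "j2 mod 3 \<noteq> k mod 3"
    "j1 mod 3 + k mod 3 - 1 = j2 mod 3 + k mod 3 - 1" by (auto simp: Rc_def split: if_splits)
  have "(j1 mod 3 = j2 mod 3 \<and> k mod 3 = k mod 3) \<or> (j1 mod 3 = k mod 3 \<and> k mod 3 = j2 mod 3)"
    by (rule resid) (use h in simp_all)
  then have "j1 mod 3 = j2 mod 3" using h(3) by blast
  moreover have "j1 div 3 = j2 div 3" using h(1,2) by simp
  ultimately show "j1 = j2" using eq3 by blast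
next
  fix j1 j2 k1 k2 s
  assume "(j1, k1) \<noteq> (j2, k2) \<and> Rc j1 k1 = Some s \<and> Rc j2 k2 = Some s"
  then show "Rc j1 k2 = None" using cross by blast
next
  fix j1 j2 k1 k2 s
  assume "(j1, k1) \<noteq> (j2, k2) \<and> Rc j1 k1 = Some s \<and> Rc j2 k2 = Some s"
  then show "Rc j2 k1 = None" using cross by blast
qed

lemma lower:
  assumes t: "t \<ge> 1" and P0: "is_PDA (3*t) (3*t) (3*t-2) S R"
  shows "card S \<ge> 3"
proof (rule ccontr)
  assume cS: "\<not> card S \<ge> 3"
  define F where "F = 3*t"
  have F3: "F \<ge> 3" using t F_def by auto
  have P: "is_PDA F F (F-2) S R" using P0 F_def by simp
  note PP = P[unfolded is_PDA_def]
  have fin: "finite S" using PP by (elim conjE)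
  have inS0: "\<forall>j<F. \<forall>k<F. \<forall>t. R j k = Some t \<longrightarrow> t \<in> S" using PP by (elim conjE)
  have cnt0: "\<forall>k<F. card {j. j < F \<and> R j k = None} = F - 2" using PP by (elim conjE)
  have rowu0: "\<forall>t\<in>S. \<forall>j<F. \<forall>k1<F. \<forall>k2<F. R j k1 = Some t \<and> R j k2 = Some t \<longrightarrow> k1 = k2" using PP by (elim conjE)
  have colu0: "\<forall>t\<in>S. \<forall>k<F. \<forall>j1<F. \<forall>j2<F. R j1 k = Some t \<and> R j2 k = Some t \<longrightarrow> j1 = j2" using PP by (elim conjE)
  have crs0: "\<forall>j1<F. \<forall>j2<F. \<forall>k1<F. \<forall>k2<F. \<forall>t.
        (j1, k1) \<noteq> (j2, k2) \<and> R j1 k1 = Some t \<and> R j2 k2 = Some t \<longrightarrow>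
        R j1 k2 = None \<and> R j2 k1 = None" using PP by (elim conjE)
  have inS: "\<And>j k x. j < F \<Longrightarrow> k < F \<Longrightarrow> R j k = Some x \<Longrightarrow> x \<in> S"
    using inS0 by blast
  have cnt: "\<And>k. k < F \<Longrightarrow> card {j. j < F \<and> R j k = None} = F - 2"
    using cnt0 by blast
  have rowu: "\<And>x j k1 k2. x \<in> S \<Longrightarrow> j < F \<Longrightarrow> k1 < F \<Longrightarrow> k2 < F \<Longrightarrow> R j k1 = Some x \<Longrightarrow> R j k2 = Some x \<Longrightarrow> k1 = k2"
    using rowu0 by blast
  have colu: "\<And>x k j1 j2. x \<in> S \<Longrightarrow> k < F \<Longrightarrow> j1 < F \<Longrightarrow> j2 < F \<Longrightarrow> R j1 k = Some x \<Longrightarrow> R j2 k = Some x \<Longrightarrow> j1 = j2"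
    using colu0 by blast
  have crs: "\<And>j1 j2 k1 k2 x. j1 < F \<Longrightarrow> j2 < F \<Longrightarrow> k1 < F \<Longrightarrow> k2 < F \<Longrightarrow> (j1, k1) \<noteq> (j2, k2) \<Longrightarrow>
      R j1 k1 = Some x \<Longrightarrow> R j2 k2 = Some x \<Longrightarrow> R j1 k2 = None"
    using crs0 by blast
  have col2: "\<exists>a b. a < F \<and> b < F \<and> a \<noteq> b \<and> R a k \<noteq> None \<and> R b k \<noteq> None" if k: "k < F" for k
  proof -
    let ?A = "{j. j < F \<and> R j k \<noteq> None}"
    have e: "{j. j < F \<and> R j k = None} = {..<F} - ?A" by auto
    have sub: "?A \<subseteq> {..<F}" by auto
    have "card ({..<F} - ?A) = F - card ?A"
      using sub by (simp add: card_Diff_subset finite_subset)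
    then have "F - card ?A = F - 2" using cnt[OF k] e by simp
    moreover have "card ?A \<le> F" using sub by (metis card_lessThan card_mono finite_lessThan)
    ultimately have "card ?A = 2" using F3 by linarith
    then obtain a b where A: "?A = {a,b}" "a \<noteq> b" by (meson card_2_iff)
    have "a \<in> ?A" "b \<in> ?A" unfolding A(1) by simp_all
    then have "a < F" "b < F" "R a k \<noteq> None" "R b k \<noteq> None" by simp_all
    then show ?thesis using A(2) by blast
  qed
  have syms: "\<exists>a b x y. a < F \<and> b < F \<and> R a k = Some x \<and> R b k = Some y \<and> x \<noteq> y \<and> x \<in> S \<and> y \<in> S"
    if k: "k < F" for k
  proof -
    obtain a b where ab: "a < F" "b < F" "a \<noteq> b" "R a k \<noteq> None" "R b k \<noteq> None" using col2[OF k] by blast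
    obtain x where x: "R a k = Some x" using ab(4) by blast
    obtain y where y: "R b k = Some y" using ab(5) by blast
    note xy = x y
    have xS: "x \<in> S" using inS[OF ab(1) k xy(1)] .
    have yS: "y \<in> S" using inS[OF ab(2) k xy(2)] .
    have "x \<noteq> y"
    proof
      assume "x = y"
      then have "a = b" using colu[OF xS k ab(1) ab(2) xy(1)] xy(2) by simp
      then show False using ab(3) by simp
    qed
    then show ?thesis using ab xy xS yS by blast
  qed
  obtain a b x y where ab: "a < F" "b < F" "R a 0 = Some x" "R b 0 = Some y" "x \<noteq> y" "x \<in> S" "y \<in> S"
    using syms[of 0] F3 by (metis less_le_trans zero_less_numeral)
  have Sxy: "S = {x,y}"
  proof -
    have sub: "{x,y} \<subseteq> S" using ab by auto
    have c2: "card {x,y} = 2" using ab by auto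
    have "card S \<le> 2" using cS by simp
    then have "card S \<le> card {x,y}" using c2 by simp
    then show ?thesis using card_seteq[OF fin sub] by simp
  qed
  have hasx: "\<exists>j. j < F \<and> R j k = Some x" if k: "k < F" for k
  proof -
    obtain a b x' y' where h: "a < F" "b < F" "R a k = Some x'" "R b k = Some y'" "x' \<noteq> y'" "x' \<in> S" "y' \<in> S"
      using syms[OF k] by blast
    then have "x' = x \<or> y' = x" using Sxy by auto
    then show ?thesis using h by blast
  qed
  define r where "r k = (SOME j. j < F \<and> R j k = Some x)" for k
  have r: "r k < F \<and> R (r k) k = Some x" if "k < F" for k
    unfolding r_def using someI_ex[OF hasx[OF that]] .
  have inj: "inj_on r {..<F}"
  proof (rule inj_onI)
    fix k1 k2 assume k1: "k1 \<in> {..<F}" and k2: "k2 \<in> {..<F}" and e: "r k1 = r k2"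
    have k1': "k1 < F" and k2': "k2 < F" using k1 k2 by auto
    show "k1 = k2"
      using rowu[OF ab(6) conjunct1[OF r[OF k1']] k1' k2' conjunct2[OF r[OF k1']]] conjunct2[OF r[OF k2']] e
      by simp
  qed
  have "r ` {..<F} \<subseteq> {..<F}" using r by auto
  then have "r ` {..<F} = {..<F}" using inj by (simp add: card_image card_subset_eq)
  then have "b \<in> r ` {..<F}" using ab(2) by simp
  then obtain k' where k': "k' < F" "r k' = b" by auto
  show False
  proof (cases "k' = 0")
    case True then show ?thesis using r[of 0] k' ab by auto
  next
    case False
    have "(r k', k') \<noteq> (a, 0)" using False by simp
    then have "R (r k') 0 = None"
      using crs[OF conjunct1[OF r[OF k'(1)]] ab(1) k'(1) _ _ conjunct2[OF r[OF k'(1)]] ab(3)] F3 by simp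
    then show ?thesis using k' ab by auto
  qed
qed

theorem mainTheorem18:
  fixes t :: nat
  assumes "t \<ge> 1"
  shows "s_PDA (3 * t) (3 * t) (3 * t - 2) = 3"
  unfolding s_PDA_def
proof (rule Least_equality)
  show "\<exists>S R. is_PDA (3 * t) (3 * t) (3 * t - 2) S R \<and> card S = 3"
    using construction[OF assms] by (intro exI[of _ "{0,1,2}"] exI[of _ Rc]) auto
next
  fix n assume "\<exists>S R. is_PDA (3 * t) (3 * t) (3 * t - 2) S R \<and> card S = n"
  then show "3 \<le> n" using lower[OF assms] by blast
qed

end
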